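(* Fix integers $h\ge0$, $n\ge1$, a multi-index $\gamma\in\mathbb{Z}_{\ge0}^n$, and set $k=|\gamma|$. Then for each of the $k^h$ functions $\pi:[h]\to[k]$ and each $r\in[k]$ there exist integers $h'_{\pi,r}\in\{0,1,\dots,h\}$, $t'_{\pi,r}\ge0$ and $j'_{\pi,r}\in[n]$ (depending only on $h,\gamma,\pi,r$) such that for every sequence $L^{(1)},\dots,L^{(T)}\in\mathbb{R}^n$ and every $t\in[T-h]$, $$(D_h(L^\gamma))^{(t)}=\sum_{\pi:[h]\to[k]}\prod_{r=1}^k\big(D_{h'_{\pi,r}}(L(j'_{\pi,r}))\big)^{(t+t'_{\pi,r})}.$$ Moreover: (1) for each $\pi$ and $r$, $h'_{\pi,r}=|\{q\in[h]:\pi(q)=r\}|$, so $\sum_{r=1}^kh'_{\pi,r}=h$; (2) for each $\pi,r$, $0\le t'_{\pi,r}+h'_{\pi,r}\le h$; (3) for each $\pi$ and each $j\in[n]$, $\gamma_j=|\{r\in[k]:j'_{\pi,r}=j\}|$.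
   Context: $L^\gamma$ denotes the scalar sequence $(L^\gamma)^{(t)}=\prod_{j=1}^n(L^{(t)}(j))^{\gamma_j}$, and $L(j)$ the scalar sequence $(L^{(t)}(j))_t$ of $j$-th coordinates. Finite differences: $(D_0L)^{(t)}=L^{(t)}$ and $(D_hL)^{(t)}=(D_{h-1}L)^{(t+1)}-(D_{h-1}L)^{(t)}$. An empty sum is $0$ and an empty product is $1$. *)

theory Defs
  imports "HOL-Library.FuncSet" Complex_Main
begin

fun D :: "nat \<Rightarrow> (nat \<Rightarrow> real) \<Rightarrow> nat \<Rightarrow> real" where
  "D 0 f t = f t"
| "D (Suc h) f t = D h f (Suc t) - D h f t"

text \<open>A vector sequence L is represented as L t j = j-th coordinate of L at time t
  (coordinates j in {1..n}). Lpow n gamma L is the scalar sequence L^gamma.\<close>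
definition Lpow :: "nat \<Rightarrow> (nat \<Rightarrow> nat) \<Rightarrow> (nat \<Rightarrow> nat \<Rightarrow> real) \<Rightarrow> nat \<Rightarrow> real" where
  "Lpow n \<gamma> L t = (\<Prod>j\<in>{1..n}. (L t j) ^ \<gamma> j)"

definition coord :: "(nat \<Rightarrow> nat \<Rightarrow> real) \<Rightarrow> nat \<Rightarrow> nat \<Rightarrow> real" where
  "coord L j = (\<lambda>t. L t j)"

end

theory Submission
  imports Defs
begin

lemma telescope:
  fixes a b :: "nat \<Rightarrow> real"
  shows "(\<Prod>r\<in>{1..k}. b r) - (\<Prod>r\<in>{1..k}. a r) =
    (\<Sum>s\<in>{1..k}. \<Prod>r\<in>{1..k}. (if r < s then a r else if r = s then b r - a r else b r))"
proof (induction k)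
  case 0 then show ?case by simp
next
  case (Suc k)
  have ins: "{1..Suc k} = insert (Suc k) {1..k}" by auto
  have e1: "(\<Prod>r\<in>{1..Suc k}. (if r < Suc k then a r else if r = Suc k then b r - a r else b r))
     = (b (Suc k) - a (Suc k)) * (\<Prod>r\<in>{1..k}. a r)"
    unfolding ins by (simp add: prod.insert) 
  have e2: "(\<Prod>r\<in>{1..Suc k}. (if r < s then a r else if r = s then b r - a r else b r))
     = b (Suc k) * (\<Prod>r\<in>{1..k}. (if r < s then a r else if r = s then b r - a r else b r))"
    if "s \<in> {1..k}" for s
    unfolding ins using that by (simp add: prod.insert)
  have "(\<Sum>s\<in>{1..Suc k}. \<Prod>r\<in>{1..Suc k}. (if r < s then a r else if r = s then b r - a r else b r))
     = (b (Suc k) - a (Suc k)) * (\<Prod>r\<in>{1..k}. a r) + b (Suc k) * ((\<Prod>r\<in>{1..k}. b r) - (\<Prod>r\<in>{1..k}. a r))"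
    unfolding ins sum.insert[OF finite_atLeastAtMost, of "Suc k" 1, simplified]
    using e1 e2 Suc.IH by (simp add: ins sum_distrib_left)
  also have "\<dots> = (\<Prod>r\<in>{1..Suc k}. b r) - (\<Prod>r\<in>{1..Suc k}. a r)"
    unfolding ins by (simp add: prod.insert algebra_simps)
  finally show ?case by simp
qed

definition cnt :: "(nat \<Rightarrow> nat) \<Rightarrow> nat \<Rightarrow> nat \<Rightarrow> nat" where
  "cnt \<pi> h r = card {q\<in>{1..h}. \<pi> q = r}"
definition lt :: "(nat \<Rightarrow> nat) \<Rightarrow> nat \<Rightarrow> nat \<Rightarrow> nat" where
  "lt \<pi> h r = card {q\<in>{1..h}. \<pi> q < r}"

lemma card_upd:
  assumes "P s"
  shows "card {q\<in>{1..Suc h}. P ((\<pi>(Suc h := s)) q)} = card {q\<in>{1..h}. P (\<pi> q)} + 1"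
proof -
  have "{q\<in>{1..Suc h}. P ((\<pi>(Suc h := s)) q)} = insert (Suc h) {q\<in>{1..h}. P (\<pi> q)}"
    using assms by auto
  then show ?thesis by simp
qed

lemma card_upd2:
  assumes "\<not> P s"
  shows "card {q\<in>{1..Suc h}. P ((\<pi>(Suc h := s)) q)} = card {q\<in>{1..h}. P (\<pi> q)}"
proof -
  have "{q\<in>{1..Suc h}. P ((\<pi>(Suc h := s)) q)} = {q\<in>{1..h}. P (\<pi> q)}"
    using assms by auto
  then show ?thesis by simp
qed

lemma Dprod:
  "D h (\<lambda>t. \<Prod>r\<in>{1..k}. g r t) t =
   (\<Sum>\<pi>\<in>{1..h} \<rightarrow>\<^sub>E {1..k}. \<Prod>r\<in>{1..k}. D (cnt \<pi> h r) (g r) (t + lt \<pi> h r))"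
proof (induction h arbitrary: t)
  case 0
  show ?case by (simp add: cnt_def lt_def)
next
  case (Suc h)
  define A where "A \<pi> r x = D (cnt \<pi> h r) (g r) (x + lt \<pi> h r)" for \<pi> r x
  have "D (Suc h) (\<lambda>t. \<Prod>r\<in>{1..k}. g r t) t =
     (\<Sum>\<pi>\<in>{1..h} \<rightarrow>\<^sub>E {1..k}. (\<Prod>r\<in>{1..k}. A \<pi> r (Suc t)) - (\<Prod>r\<in>{1..k}. A \<pi> r t))"
    unfolding D.simps Suc.IH A_def by (simp add: sum_subtractf)
  also have "\<dots> = (\<Sum>\<pi>\<in>{1..h} \<rightarrow>\<^sub>E {1..k}. \<Sum>s\<in>{1..k}. \<Prod>r\<in>{1..k}.
       (if r < s then A \<pi> r t else if r = s then A \<pi> r (Suc t) - A \<pi> r t else A \<pi> r (Suc t)))"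
    by (rule sum.cong[OF refl], rule telescope)
  also have "\<dots> = (\<Sum>(s,\<pi>)\<in>{1..k} \<times> ({1..h} \<rightarrow>\<^sub>E {1..k}).
       \<Prod>r\<in>{1..k}. D (cnt (\<pi>(Suc h := s)) (Suc h) r) (g r) (t + lt (\<pi>(Suc h := s)) (Suc h) r))"
  proof -
    have "(\<Sum>\<pi>\<in>{1..h} \<rightarrow>\<^sub>E {1..k}. \<Sum>s\<in>{1..k}. \<Prod>r\<in>{1..k}.
       (if r < s then A \<pi> r t else if r = s then A \<pi> r (Suc t) - A \<pi> r t else A \<pi> r (Suc t)))
      = (\<Sum>s\<in>{1..k}. \<Sum>\<pi>\<in>{1..h} \<rightarrow>\<^sub>E {1..k}. \<Prod>r\<in>{1..k}.
       (if r < s then A \<pi> r t else if r = s then A \<pi> r (Suc t) - A \<pi> r t else A \<pi> r (Suc t)))"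
      by (rule sum.swap)
    also have "\<dots> = (\<Sum>(s,\<pi>)\<in>{1..k} \<times> ({1..h} \<rightarrow>\<^sub>E {1..k}). \<Prod>r\<in>{1..k}.
       (if r < s then A \<pi> r t else if r = s then A \<pi> r (Suc t) - A \<pi> r t else A \<pi> r (Suc t)))"
      by (simp add: sum.cartesian_product)
    also have "\<dots> = (\<Sum>(s,\<pi>)\<in>{1..k} \<times> ({1..h} \<rightarrow>\<^sub>E {1..k}).
       \<Prod>r\<in>{1..k}. D (cnt (\<pi>(Suc h := s)) (Suc h) r) (g r) (t + lt (\<pi>(Suc h := s)) (Suc h) r))"
    proof (rule sum.cong[OF refl], clarify, rule prod.cong[OF refl])
      fix s \<pi> r
      have c1: "cnt (\<pi>(Suc h := s)) (Suc h) r = (if s = r then Suc (cnt \<pi> h r) else cnt \<pi> h r)"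
        unfolding cnt_def using card_upd[of "\<lambda>x. x = r" s h \<pi>] card_upd2[of "\<lambda>x. x = r" s h \<pi>]
        by (cases "s = r") (simp_all del: fun_upd_apply)
      have c2: "lt (\<pi>(Suc h := s)) (Suc h) r = (if s < r then Suc (lt \<pi> h r) else lt \<pi> h r)"
        unfolding lt_def using card_upd[of "\<lambda>x. x < r" s h \<pi>] card_upd2[of "\<lambda>x. x < r" s h \<pi>]
        by (cases "s < r") (simp_all del: fun_upd_apply)
      show "(if r < s then A \<pi> r t else if r = s then A \<pi> r (Suc t) - A \<pi> r t else A \<pi> r (Suc t))
         = D (cnt (\<pi>(Suc h := s)) (Suc h) r) (g r) (t + lt (\<pi>(Suc h := s)) (Suc h) r)"
        unfolding c1 c2 A_def by auto
    qed
    finally show ?thesis .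
  qed
  also have "\<dots> = (\<Sum>\<pi>'\<in>{1..Suc h} \<rightarrow>\<^sub>E {1..k}.
       \<Prod>r\<in>{1..k}. D (cnt \<pi>' (Suc h) r) (g r) (t + lt \<pi>' (Suc h) r))"
  proof -
    have ins: "{1..Suc h} = insert (Suc h) {1..h}" by auto
    have "{1..Suc h} \<rightarrow>\<^sub>E {1..k} = (\<lambda>(y, g). g(Suc h := y)) ` ({1..k} \<times> ({1..h} \<rightarrow>\<^sub>E {1..k}))"
      unfolding ins PiE_insert_eq by simp
    moreover have "inj_on (\<lambda>(y, g). g(Suc h := y)) ({1..k} \<times> ({1..h} \<rightarrow>\<^sub>E {1..k}))"
      using inj_combinator[of "Suc h" "{1..h}" "\<lambda>_. {1..k}"] by simp
    ultimately show ?thesis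
      by (simp add: sum.reindex case_prod_unfold)
  qed
  finally show ?case .
qed

lemma jj_exists:
  "\<exists>jj::nat\<Rightarrow>nat. (\<forall>r\<in>{1..(\<Sum>j\<in>{1..n}. \<gamma> j)}. jj r \<in> {1..n}) \<and>
     (\<forall>j\<in>{1..n}. card {r\<in>{1..(\<Sum>j\<in>{1..n}. \<gamma> j)}. jj r = j} = \<gamma> j) \<and>
     (\<forall>c::nat\<Rightarrow>real. (\<Prod>j\<in>{1..n}. c j ^ \<gamma> j) = (\<Prod>r\<in>{1..(\<Sum>j\<in>{1..n}. \<gamma> j)}. c (jj r)))"
proof (induction n)
  case 0
  show ?case by simp
next
  case (Suc n)
  define S where "S = (\<Sum>j\<in>{1..n}. \<gamma> j)"
  have S1: "(\<Sum>j\<in>{1..Suc n}. \<gamma> j) = S + \<gamma> (Suc n)" by (simp add: S_def)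
  from Suc.IH obtain jj where j1: "\<forall>r\<in>{1..S}. jj r \<in> {1..n}"
    and j2: "\<forall>j\<in>{1..n}. card {r\<in>{1..S}. jj r = j} = \<gamma> j"
    and j3: "\<forall>c::nat\<Rightarrow>real. (\<Prod>j\<in>{1..n}. c j ^ \<gamma> j) = (\<Prod>r\<in>{1..S}. c (jj r))"
    unfolding S_def by blast
  define jj' where "jj' r = (if r \<le> S then jj r else Suc n)" for r
  have U: "{1..S + \<gamma> (Suc n)} = {1..S} \<union> {S+1..S + \<gamma> (Suc n)}" by auto
  show ?case unfolding S1
  proof (intro exI[of _ jj'] conjI ballI allI)
    fix r assume "r \<in> {1..S + \<gamma> (Suc n)}"
    then show "jj' r \<in> {1..Suc n}" using j1 by (force simp: jj'_def)
  next
    fix j assume j: "j \<in> {1..Suc n}"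
    show "card {r \<in> {1..S + \<gamma> (Suc n)}. jj' r = j} = \<gamma> j"
    proof (cases "j = Suc n")
      case True
      have "{r \<in> {1..S + \<gamma> (Suc n)}. jj' r = j} = {S+1..S + \<gamma> (Suc n)}"
        using j1 True by (force simp: jj'_def)
      then show ?thesis using True by simp
    next
      case False
      then have jn: "j \<in> {1..n}" using j by auto
      have "{r \<in> {1..S + \<gamma> (Suc n)}. jj' r = j} = {r\<in>{1..S}. jj r = j}"
        using False by (auto simp: jj'_def)
      then show ?thesis using j2 jn by simp
    qed
  next
    fix c :: "nat \<Rightarrow> real"
    have "(\<Prod>r\<in>{1..S + \<gamma> (Suc n)}. c (jj' r)) = (\<Prod>r\<in>{1..S}. c (jj' r)) * (\<Prod>r\<in>{S+1..S + \<gamma> (Suc n)}. c (jj' r))"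
      unfolding U by (rule prod.union_disjoint) auto
    also have "(\<Prod>r\<in>{1..S}. c (jj' r)) = (\<Prod>r\<in>{1..S}. c (jj r))"
      by (rule prod.cong) (auto simp: jj'_def)
    also have "(\<Prod>r\<in>{S+1..S + \<gamma> (Suc n)}. c (jj' r)) = (\<Prod>r\<in>{S+1..S + \<gamma> (Suc n)}. c (Suc n))"
      by (rule prod.cong) (auto simp: jj'_def)
    also have "\<dots> = c (Suc n) ^ \<gamma> (Suc n)" by simp
    finally show "(\<Prod>j\<in>{1..Suc n}. c j ^ \<gamma> j) = (\<Prod>r\<in>{1..S + \<gamma> (Suc n)}. c (jj' r))"
      using j3 by simp
  qed
qed

theorem lemma4p5:
  fixes h n :: nat and \<gamma> :: "nat \<Rightarrow> nat"
  assumes "n \<ge> 1"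
  shows "\<exists>h' t' j' :: (nat \<Rightarrow> nat) \<Rightarrow> nat \<Rightarrow> nat.
     (\<forall>\<pi>\<in>{1..h} \<rightarrow>\<^sub>E {1..(\<Sum>j\<in>{1..n}. \<gamma> j)}. \<forall>r\<in>{1..(\<Sum>j\<in>{1..n}. \<gamma> j)}.
        h' \<pi> r \<le> h \<and> j' \<pi> r \<in> {1..n}) \<and>
     (\<forall>(L :: nat \<Rightarrow> nat \<Rightarrow> real) (T :: nat) (t :: nat). 1 \<le> t \<and> t \<le> T - h \<longrightarrow>
        D h (Lpow n \<gamma> L) t =
          (\<Sum>\<pi>\<in>{1..h} \<rightarrow>\<^sub>E {1..(\<Sum>j\<in>{1..n}. \<gamma> j)}.
             \<Prod>r\<in>{1..(\<Sum>j\<in>{1..n}. \<gamma> j)}. D (h' \<pi> r) (coord L (j' \<pi> r)) (t + t' \<pi> r))) \<and>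
     (\<forall>\<pi>\<in>{1..h} \<rightarrow>\<^sub>E {1..(\<Sum>j\<in>{1..n}. \<gamma> j)}. \<forall>r\<in>{1..(\<Sum>j\<in>{1..n}. \<gamma> j)}.
        h' \<pi> r = card {q\<in>{1..h}. \<pi> q = r}) \<and>
     (\<forall>\<pi>\<in>{1..h} \<rightarrow>\<^sub>E {1..(\<Sum>j\<in>{1..n}. \<gamma> j)}.
        (\<Sum>r\<in>{1..(\<Sum>j\<in>{1..n}. \<gamma> j)}. h' \<pi> r) = h) \<and>
     (\<forall>\<pi>\<in>{1..h} \<rightarrow>\<^sub>E {1..(\<Sum>j\<in>{1..n}. \<gamma> j)}. \<forall>r\<in>{1..(\<Sum>j\<in>{1..n}. \<gamma> j)}.
        t' \<pi> r + h' \<pi> r \<le> h) \<and>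
     (\<forall>\<pi>\<in>{1..h} \<rightarrow>\<^sub>E {1..(\<Sum>j\<in>{1..n}. \<gamma> j)}. \<forall>j\<in>{1..n}.
        \<gamma> j = card {r\<in>{1..(\<Sum>j\<in>{1..n}. \<gamma> j)}. j' \<pi> r = j})"
proof -
  define k where "k = (\<Sum>j\<in>{1..n}. \<gamma> j)"
  obtain jj where j1: "\<forall>r\<in>{1..k}. jj r \<in> {1..n}"
    and j2: "\<forall>j\<in>{1..n}. card {r\<in>{1..k}. jj r = j} = \<gamma> j"
    and j3: "\<forall>c::nat\<Rightarrow>real. (\<Prod>j\<in>{1..n}. c j ^ \<gamma> j) = (\<Prod>r\<in>{1..k}. c (jj r))"
    using jj_exists[where n=n and \<gamma>=\<gamma>] unfolding k_def by blast
  have Lp: "Lpow n \<gamma> L = (\<lambda>t. \<Prod>r\<in>{1..k}. coord L (jj r) t)" for L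
    using j3 unfolding Lpow_def coord_def by blast
  show ?thesis unfolding k_def[symmetric]
  proof (rule exI[of _ "\<lambda>\<pi> r. cnt \<pi> h r"], rule exI[of _ "\<lambda>\<pi> r. lt \<pi> h r"], rule exI[of _ "\<lambda>\<pi> r. jj r"],
      intro conjI ballI allI impI)
    fix \<pi> r
    show "cnt \<pi> h r \<le> h" unfolding cnt_def
      using card_mono[of "{1..h}" "{q\<in>{1..h}. \<pi> q = r}"] by force
  next
    fix \<pi> r assume "\<pi> \<in> {1..h} \<rightarrow>\<^sub>E {1..k}" "r \<in> {1..k}"
    then show "jj r \<in> {1..n}" using j1 by blast
  next
    fix L :: "nat \<Rightarrow> nat \<Rightarrow> real" and T t :: nat
    show "D h (Lpow n \<gamma> L) t = (\<Sum>\<pi>\<in>{1..h} \<rightarrow>\<^sub>E {1..k}. \<Prod>r\<in>{1..k}. D (cnt \<pi> h r) (coord L (jj r)) (t + lt \<pi> h r))"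
      unfolding Lp by (rule Dprod)
  next
    fix \<pi> r show "cnt \<pi> h r = card {q \<in> {1..h}. \<pi> q = r}" by (simp add: cnt_def)
  next
    fix \<pi> assume p: "\<pi> \<in> {1..h} \<rightarrow>\<^sub>E {1..k}"
    have "(\<Sum>r\<in>{1..k}. \<Sum>q\<in>{q. q \<in> {1..h} \<and> \<pi> q = r}. (1::nat)) = (\<Sum>q\<in>{1..h}. 1)"
      by (rule sum.group) (use p in auto)
    then show "(\<Sum>r\<in>{1..k}. cnt \<pi> h r) = h" by (simp add: cnt_def)
  next
    fix \<pi> r
    have "lt \<pi> h r + cnt \<pi> h r = card ({q\<in>{1..h}. \<pi> q < r} \<union> {q\<in>{1..h}. \<pi> q = r})"
      unfolding lt_def cnt_def by (rule card_Un_disjoint[symmetric]) auto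
    also have "\<dots> \<le> card {1..h}" by (rule card_mono) auto
    finally show "lt \<pi> h r + cnt \<pi> h r \<le> h" by simp
  next
    fix \<pi> j assume "j \<in> {1..n}"
    then show "\<gamma> j = card {r \<in> {1..k}. jj r = j}" using j2 by simp
  qed
qed

end
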